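(* Consider the generalized linear model described in the context with $m=p=2$ and model matrix \[ \mathbf{X}=\begin{bmatrix}q_1(\mathbf{x}_1)&q_2(\mathbf{x}_1)\\ q_1(\mathbf{x}_2)&q_2(\mathbf{x}_2)\end{bmatrix} \] of full rank, and suppose $\nu_i>0$ for $i=1,2$. Then an allocation $\mathbf{w}_*=(w_1^*,w_2^* )^T\in S_2$ is A-optimal if and only if $w_i^*\propto\{\nu_i[q_1(\mathbf{x}_i)^2+q_2(\mathbf{x}_i)^2]\}^{-1/2}$, $i=1,2$.
   Context: Generalized linear model (GLM): independent responses $Y_i$ from a one-parameter exponential family with $E(Y_i)=\mu_i$ and $\eta_i=g(\mu_i)=\mathbf{q}(\mathbf{x}_i)^T\boldsymbol\beta$, where $g$ is the link function, $\mathbf{q}(\mathbf{x})=(q_1(\mathbf{x}),\ldots,q_p(\mathbf{x}))^T$ are predictor functions, and $\boldsymbol\beta\in\mathbb{R}^p$ is a fixed (assumed) parameter vector. Let $\nu_i=(\partial\mu_i/\partial\eta_i)^2/\mathrm{Var}(Y_i)$. Let $S_m=\{\mathbf{w}\in\mathbb{R}^m: w_i\ge0,\sum_iw_i=1\}$, $\mathbf{W}=\mathrm{diag}\{w_1\nu_1,\ldots,w_m\nu_m\}$, $f(\mathbf{w})=|\mathbf{X}^T\mathbf{W}\mathbf{X}|$, and $h(\mathbf{w})=[\mathrm{tr}((\mathbf{X}^T\mathbf{W}\mathbf{X})^{-1})]^{-1}$ if $f(\mathbf{w})>0$, $h(\mathbf{w})=0$ otherwise. An allocation is A-optimal if it maximizes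 $h$ over $S_m$. *)

theory Defs
  imports "HOL-Analysis.Analysis"
begin

definition alloc_simplex :: "(real^'m) set" where
  "alloc_simplex = {w. (\<forall>i. 0 \<le> w $ i) \<and> (\<Sum>i\<in>UNIV. w $ i) = 1}"

definition W_mat :: "real^'m \<Rightarrow> real^'m \<Rightarrow> real^'m^'m" where
  "W_mat nu w = (\<chi> i j. if i = j then w $ i * nu $ i else 0)"

definition info_mat :: "real^'p^'m \<Rightarrow> real^'m \<Rightarrow> real^'m \<Rightarrow> real^'p^'p" where
  "info_mat X nu w = transpose X ** W_mat nu w ** X"

definition f_crit :: "real^'p^'m \<Rightarrow> real^'m \<Rightarrow> real^'m \<Rightarrow> real" where
  "f_crit X nu w = det (info_mat X nu w)"

definition h_crit :: "real^'p^'m \<Rightarrow> real^'m \<Rightarrow> real^'m \<Rightarrow> real" where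
  "h_crit X nu w = (if f_crit X nu w > 0
      then inverse (trace (matrix_inv (info_mat X nu w))) else 0)"

definition A_optimal :: "real^'p^'m \<Rightarrow> real^'m \<Rightarrow> real^'m \<Rightarrow> bool" where
  "A_optimal X nu w \<longleftrightarrow> w \<in> alloc_simplex \<and> (\<forall>v\<in>alloc_simplex. h_crit X nu v \<le> h_crit X nu w)"

end

theory Submission imports Defs begin

lemma inv2_trace:
  fixes M :: "real^2^2"
  assumes "det M \<noteq> 0"
  shows "trace (matrix_inv M) = trace M / det M"
proof -
  define N :: "real^2^2" where "N = (\<chi> i j. (if i = 1 \<and> j = 1 then M$2$2 else if i = 2 \<and> j = 2 then M$1$1
      else - M$i$j) / det M)"
  have d: "det M = M$1$1 * M$2$2 - M$1$2 * M$2$1" by (rule det_2)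
  have dsq: "M$1$1*(M$1$1*(M$2$2*M$2$2)) + M$1$2*(M$1$2*(M$2$1*M$2$1)) \<noteq> 2*(M$1$1*(M$1$2*(M$2$1*M$2$2)))"
  proof
    assume "M$1$1*(M$1$1*(M$2$2*M$2$2)) + M$1$2*(M$1$2*(M$2$1*M$2$1)) = 2*(M$1$1*(M$1$2*(M$2$1*M$2$2)))"
    then have "(M$1$1*M$2$2 - M$1$2*M$2$1)^2 = 0" by (simp add: power2_eq_square algebra_simps)
    then show False using assms d by simp
  qed
  have MN: "M ** N = mat 1" and NM: "N ** M = mat 1"
    using assms dsq unfolding N_def d
    by (auto simp: vec_eq_iff forall_2 matrix_matrix_mult_def sum_2 mat_def field_simps)
  have "M ** matrix_inv M = mat 1 \<and> matrix_inv M ** M = mat 1"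
    unfolding matrix_inv_def by (rule someI[of _ N]) (use MN NM in auto)
  then have "matrix_inv M = N"
    by (metis MN matrix_mul_assoc matrix_mul_lid matrix_mul_rid)
  then show ?thesis
    unfolding N_def trace_def using assms by (simp add: sum_2 d add_divide_distrib)
qed

lemma info_entry:
  "info_mat (X::real^2^2) nu w $ i $ j = X$1$i * (w$1 * nu$1) * X$1$j + X$2$i * (w$2 * nu$2) * X$2$j"
  unfolding info_mat_def W_mat_def
  by (simp add: matrix_matrix_mult_def transpose_def sum_2 algebra_simps)

lemma info_det:
  "det (info_mat (X::real^2^2) nu w) = (det X)^2 * (w$1*nu$1) * (w$2*nu$2)"
  by (simp add: det_2 info_entry power2_eq_square algebra_simps)

lemma info_trace:
  "trace (info_mat (X::real^2^2) nu w) = (w$1*nu$1) * (X$1$1^2 + X$1$2^2) + (w$2*nu$2) * (X$2$1^2 + X$2$2^2)"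
  by (simp add: trace_def sum_2 info_entry power2_eq_square algebra_simps)

lemma powr_mhalf: "(x::real) > 0 \<Longrightarrow> x powr (-1/2) = 1 / sqrt x"
  by (simp add: powr_minus_divide powr_half_sqrt[symmetric] powr_minus)

lemma powr_mhalf': "(x::real) > 0 \<Longrightarrow> x powr (- (1/2)) = 1 / sqrt x"
  using powr_mhalf[of x] by simp

lemma core:
  fixes a b w1 w2 :: real
  assumes ab: "a > 0" "b > 0" and w: "w1 \<ge> 0" "w2 \<ge> 0" "w1 + w2 = 1"
  defines "G \<equiv> \<lambda>(v1::real) v2. if v1 > 0 \<and> v2 > 0 then v1 * v2/(a * v1+b * v2) else 0"
  shows "(\<forall>v1 v2. v1 \<ge> 0 \<longrightarrow> v2 \<ge> 0 \<longrightarrow> v1 + v2 = 1 \<longrightarrow> G v1 v2 \<le> G w1 w2)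
     \<longleftrightarrow> (w1 > 0 \<and> w2 > 0 \<and> w1^2 * a = w2^2 * b)"
proof -
  define s where "s = sqrt a"
  define t where "t = sqrt b"
  have s: "s > 0" "s^2 = a" using ab by (auto simp: s_def)
  have t: "t > 0" "t^2 = b" using ab by (auto simp: t_def)
  have key: "a * v1 + b * v2 = (s+t)^2 * (v1 * v2) + (v1 * s - v2 * t)^2" if "v1 + v2 = 1" for v1 v2
  proof -
    have "a * v1 + b * v2 = s^2 * v1 * (v1+v2) + t^2 * v2 * (v1+v2)" using that s t by simp
    then show ?thesis by (simp add: power2_eq_square algebra_simps)
  qed
  have le: "G v1 v2 \<le> 1/(s+t)^2" if "v1 \<ge> 0" "v2 \<ge> 0" "v1 + v2 = 1" for v1 v2
  proof (cases "v1 > 0 \<and> v2 > 0")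
    case True
    have E: "a * v1+b * v2 > 0" using True ab by (simp add: add_pos_pos)
    have "v1 * v2 * (s+t)^2 \<le> a * v1+b * v2" using key[OF that(3)] by simp
    then show ?thesis using True E s t unfolding G_def
      by (simp add: divide_simps mult.commute)
  next
    case False then show ?thesis using s t unfolding G_def by auto
  qed
  have eq: "G v1 v2 = 1/(s+t)^2 \<longleftrightarrow> v1 * s = v2 * t" if "v1 > 0" "v2 > 0" "v1 + v2 = 1" for v1 v2
  proof -
    have E: "a * v1+b * v2 > 0" using that ab by (simp add: add_pos_pos)
    have st: "(s+t)^2 > 0" using s t by simp
    have "G v1 v2 = 1/(s+t)^2 \<longleftrightarrow> v1 * v2 * (s+t)^2 = a * v1+b * v2"
      using that E st unfolding G_def by (simp add: divide_simps mult.commute)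
    also have "\<dots> \<longleftrightarrow> (v1 * s - v2 * t)^2 = 0" using key[OF that(3)] by (simp add: algebra_simps)
    also have "\<dots> \<longleftrightarrow> v1 * s = v2 * t" by simp
    finally show ?thesis .
  qed
  have sq: "v1^2 * a = v2^2 * b \<longleftrightarrow> v1 * s = v2 * t" if "v1 > 0" "v2 > 0" for v1 v2
  proof -
    have "v1^2 * a = (v1 * s)^2" "v2^2 * b = (v2 * t)^2" using s t by (simp_all add: power_mult_distrib)
    moreover have "v1 * s > 0" "v2 * t > 0" using that s t by simp_all
    ultimately show ?thesis by (metis order_less_le power2_eq_iff_nonneg)
  qed
  define u1 where "u1 = t/(s+t)"
  define u2 where "u2 = s/(s+t)"
  have u: "u1 > 0" "u2 > 0" "u1 + u2 = 1" "u1 * s = u2 * t"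
    using s t by (auto simp: u1_def u2_def add_divide_distrib[symmetric])
  have Gu: "G u1 u2 = 1/(s+t)^2" using eq[OF u(1-3)] u(4) by simp
  show ?thesis
  proof
    assume opt: "\<forall>v1 v2. v1 \<ge> 0 \<longrightarrow> v2 \<ge> 0 \<longrightarrow> v1 + v2 = 1 \<longrightarrow> G v1 v2 \<le> G w1 w2"
    have "G u1 u2 \<le> G w1 w2" using opt u by auto
    then have ge: "1/(s+t)^2 \<le> G w1 w2" using Gu by simp
    have pos: "0 < 1/(s+t)^2" using s t by simp
    have wp: "w1 > 0 \<and> w2 > 0" using ge pos unfolding G_def by (auto split: if_splits)
    have "G w1 w2 = 1/(s+t)^2" using ge le[OF w] by simp
    then have "w1 * s = w2 * t" using eq wp w by blast
    then show "w1 > 0 \<and> w2 > 0 \<and> w1^2 * a = w2^2 * b" using sq wp by blast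
  next
    assume c: "w1 > 0 \<and> w2 > 0 \<and> w1^2 * a = w2^2 * b"
    then have "G w1 w2 = 1/(s+t)^2" using eq sq w by blast
    then show "\<forall>v1 v2. v1 \<ge> 0 \<longrightarrow> v2 \<ge> 0 \<longrightarrow> v1 + v2 = 1 \<longrightarrow> G v1 v2 \<le> G w1 w2"
      using le by auto
  qed
qed

lemma simplex2: "(v::real^2) \<in> alloc_simplex \<longleftrightarrow> v$1 \<ge> 0 \<and> v$2 \<ge> 0 \<and> v$1 + v$2 = 1"
  by (simp add: alloc_simplex_def forall_2 sum_2)

theorem corollary2:
  fixes X :: "real^2^2" and nu :: "real^2" and w :: "real^2"
  assumes "rank X = 2"
    and "\<forall>i. nu $ i > 0"
    and "w \<in> alloc_simplex"
  shows "A_optimal X nu w \<longleftrightarrow>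
    (\<exists>c. \<forall>i. w $ i = c * (nu $ i * (\<Sum>j\<in>UNIV. (X $ i $ j)^2)) powr (-1/2))"
proof -
  have D: "det X \<noteq> 0" using assms(1) det_eq_0_rank[of X] by simp
  define r1 where "r1 = X$1$1^2 + X$1$2^2"
  define r2 where "r2 = X$2$1^2 + X$2$2^2"
  have n: "nu$1 > 0" "nu$2 > 0" using assms(2) by auto
  have r1: "r1 > 0"
  proof (rule ccontr)
    assume "\<not> r1 > 0"
    then have "X$1$1 = 0" "X$1$2 = 0" unfolding r1_def
      by (simp_all add: not_less sum_power2_le_zero_iff)
    then show False using D by (simp add: det_2)
  qed
  have r2: "r2 > 0"
  proof (rule ccontr)
    assume "\<not> r2 > 0"
    then have "X$2$1 = 0" "X$2$2 = 0" unfolding r2_def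
      by (simp_all add: not_less sum_power2_le_zero_iff)
    then show False using D by (simp add: det_2)
  qed
  define a where "a = nu$1 * r1"
  define b where "b = nu$2 * r2"
  have ab: "a > 0" "b > 0" using n r1 r2 by (auto simp: a_def b_def)
  define K where "K = (det X)^2 * nu$1 * nu$2"
  have K: "K > 0" using D n by (simp add: K_def)
  define G where "G \<equiv> \<lambda>(v1::real) v2. if v1 > 0 \<and> v2 > 0 then v1 * v2/(a * v1 + b * v2) else 0"
  have hG: "h_crit X nu v = K * G (v$1) (v$2)" if "v \<in> alloc_simplex" for v
  proof (cases "v$1 > 0 \<and> v$2 > 0")
    case True
    have dM: "det (info_mat X nu v) = K * (v$1 * v$2)" by (simp add: info_det K_def)
    have fpos: "f_crit X nu v > 0" using True K by (simp add: f_crit_def dM)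
    have tM: "trace (info_mat X nu v) = a * v$1 + b * v$2"
      by (simp add: info_trace a_def b_def r1_def r2_def algebra_simps)
    have "h_crit X nu v = inverse (trace (info_mat X nu v) / det (info_mat X nu v))"
      using fpos inv2_trace[of "info_mat X nu v"] by (simp add: h_crit_def f_crit_def)
    also have "\<dots> = K * (v$1 * v$2) / (a * v$1 + b * v$2)" by (simp add: dM tM)
    finally show ?thesis using True by (simp add: G_def)
  next
    case False
    then have "v$1 = 0 \<or> v$2 = 0" using that by (auto simp: simplex2)
    then have "f_crit X nu v = 0" by (auto simp: f_crit_def info_det)
    then show ?thesis using False by (auto simp: h_crit_def G_def)
  qed
  have w: "w$1 \<ge> 0" "w$2 \<ge> 0" "w$1 + w$2 = 1" using assms(3) by (auto simp: simplex2)
  have "A_optimal X nu w \<longleftrightarrow> (\<forall>v1 v2. v1 \<ge> 0 \<longrightarrow> v2 \<ge> 0 \<longrightarrow> v1 + v2 = 1 \<longrightarrow> G v1 v2 \<le> G (w$1) (w$2))"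
  proof
    assume opt: "A_optimal X nu w"
    show "\<forall>v1 v2. v1 \<ge> 0 \<longrightarrow> v2 \<ge> 0 \<longrightarrow> v1 + v2 = 1 \<longrightarrow> G v1 v2 \<le> G (w$1) (w$2)"
    proof (intro allI impI)
      fix v1 v2 :: real assume v: "v1 \<ge> 0" "v2 \<ge> 0" "v1 + v2 = 1"
      define v :: "real^2" where "v = (\<chi> i. if i = 1 then v1 else v2)"
      have v12: "v$1 = v1" "v$2 = v2" by (simp_all add: v_def)
      have vs: "v \<in> alloc_simplex" using v by (simp add: simplex2 v12)
      have "h_crit X nu v \<le> h_crit X nu w" using opt vs by (simp add: A_optimal_def)
      then have "K * G v1 v2 \<le> K * G (w$1) (w$2)" using hG[OF vs] hG[OF assms(3)] v12 by simp
      then show "G v1 v2 \<le> G (w$1) (w$2)" using K by simp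
    qed
  next
    assume opt: "\<forall>v1 v2. v1 \<ge> 0 \<longrightarrow> v2 \<ge> 0 \<longrightarrow> v1 + v2 = 1 \<longrightarrow> G v1 v2 \<le> G (w$1) (w$2)"
    show "A_optimal X nu w" unfolding A_optimal_def
    proof (intro conjI ballI assms(3))
      fix v :: "real^2" assume vs: "v \<in> alloc_simplex"
      have "G (v$1) (v$2) \<le> G (w$1) (w$2)" using opt vs by (simp add: simplex2)
      then show "h_crit X nu v \<le> h_crit X nu w" using hG[OF vs] hG[OF assms(3)] K by simp
    qed
  qed
  also have "\<dots> \<longleftrightarrow> (w$1 > 0 \<and> w$2 > 0 \<and> (w$1)^2 * a = (w$2)^2 * b)"
    unfolding G_def by (rule core[OF ab w])
  also have "\<dots> \<longleftrightarrow> (\<exists>c. \<forall>i. w $ i = c * (nu $ i * (\<Sum>j\<in>UNIV. (X $ i $ j)^2)) powr (-1/2))"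
  proof -
    have pw: "(nu $ i * (\<Sum>j\<in>UNIV. (X $ i $ j)^2)) powr (-1/2) = (if i = 1 then 1/sqrt a else 1/sqrt b)" for i
    proof (cases "i = 1")
      case True then show ?thesis using ab by (simp add: sum_2 a_def r1_def powr_mhalf powr_mhalf')
    next
      case False then have "i = 2" using exhaust_2 by blast
      then show ?thesis using ab by (simp add: sum_2 b_def r2_def powr_mhalf powr_mhalf')
    qed
    have sa: "sqrt a > 0" "sqrt b > 0" using ab by auto
    have "(\<exists>c. \<forall>i. w $ i = c * (nu $ i * (\<Sum>j\<in>UNIV. (X $ i $ j)^2)) powr (-1/2))
        \<longleftrightarrow> (\<exists>c. w$1 = c / sqrt a \<and> w$2 = c / sqrt b)"
      unfolding forall_2 pw by simp
    also have "\<dots> \<longleftrightarrow> (w$1 > 0 \<and> w$2 > 0 \<and> (w$1)^2 * a = (w$2)^2 * b)"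
    proof
      assume "\<exists>c. w$1 = c / sqrt a \<and> w$2 = c / sqrt b"
      then obtain c where c: "w$1 = c / sqrt a" "w$2 = c / sqrt b" by blast
      have "c > 0"
      proof (rule ccontr)
        assume "\<not> c > 0"
        then have "c / sqrt a \<le> 0" "c / sqrt b \<le> 0" using sa by (simp_all add: divide_nonpos_pos)
        then show False using w c by simp
      qed
      moreover have "(w$1)^2 * a = c^2" "(w$2)^2 * b = c^2" using c ab
        by (simp_all add: power_divide)
      ultimately show "w$1 > 0 \<and> w$2 > 0 \<and> (w$1)^2 * a = (w$2)^2 * b" using c sa by simp
    next
      assume h: "w$1 > 0 \<and> w$2 > 0 \<and> (w$1)^2 * a = (w$2)^2 * b"
      have "(w$1 * sqrt a)^2 = (w$2 * sqrt b)^2" using h ab by (simp add: power_mult_distrib)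
      then have e: "w$1 * sqrt a = w$2 * sqrt b" using h sa
        by (metis power2_eq_iff_nonneg order_less_le mult_pos_pos)
      show "\<exists>c. w$1 = c / sqrt a \<and> w$2 = c / sqrt b"
        by (rule exI[of _ "w$1 * sqrt a"]) (use e sa in \<open>auto simp: field_simps\<close>)
    qed
    finally show ?thesis by simp
  qed
  finally show ?thesis .
qed

end
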